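(* Let $F,K\ge1$ and $0\le Z<F$ be integers. If some element of $S$ occupies exactly $Z+1$ cells of an $S$-PDA$(F,K,Z)$, then $|S|\ge (F-Z-1)(Z+1)+1$.
   Context: A placement delivery array $S$-PDA$(F,K,Z)$ is an $F\times K$ array $R=(r_{j,k})$, $1\le j\le F$, $1\le k\le K$, over a finite set $S$ such that: (1) each cell is either empty or contains an element of $S$; (2) each column contains exactly $Z$ empty cells; (3) each element of $S$ occurs at most once in each row and at most once in each column; (4) if two distinct nonempty cells satisfy $r_{j_1,k_1}=r_{j_2,k_2}=t\in S$, then the cells $r_{j_1,k_2}$ and $r_{j_2,k_1}$ are empty. *)

theory Defs
  imports Main
begin

definition is_PDA :: "'a set \<Rightarrow> nat \<Rightarrow> nat \<Rightarrow> nat \<Rightarrow> (nat \<Rightarrow> nat \<Rightarrow> 'a option) \<Rightarrow> bool" where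
  "is_PDA S F K Z R \<longleftrightarrow>
     finite S \<and>
     (\<forall>j\<in>{1..F}. \<forall>k\<in>{1..K}. R j k = None \<or> (\<exists>t\<in>S. R j k = Some t)) \<and>
     (\<forall>k\<in>{1..K}. card {j\<in>{1..F}. R j k = None} = Z) \<and>
     (\<forall>t\<in>S. \<forall>j\<in>{1..F}. \<forall>k1\<in>{1..K}. \<forall>k2\<in>{1..K}.
        R j k1 = Some t \<and> R j k2 = Some t \<longrightarrow> k1 = k2) \<and>
     (\<forall>t\<in>S. \<forall>k\<in>{1..K}. \<forall>j1\<in>{1..F}. \<forall>j2\<in>{1..F}.
        R j1 k = Some t \<and> R j2 k = Some t \<longrightarrow> j1 = j2) \<and>
     (\<forall>t\<in>S. \<forall>j1\<in>{1..F}. \<forall>j2\<in>{1..F}. \<forall>k1\<in>{1..K}. \<forall>k2\<in>{1..K}.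
        (j1, k1) \<noteq> (j2, k2) \<and> R j1 k1 = Some t \<and> R j2 k2 = Some t \<longrightarrow>
        R j1 k2 = None \<and> R j2 k1 = None)"

definition occ_cells :: "nat \<Rightarrow> nat \<Rightarrow> (nat \<Rightarrow> nat \<Rightarrow> 'a option) \<Rightarrow> 'a \<Rightarrow> (nat \<times> nat) set" where
  "occ_cells F K R t = {(j, k). j \<in> {1..F} \<and> k \<in> {1..K} \<and> R j k = Some t}"

end

theory Submission
  imports Defs
begin

theorem mainTheorem13:
  fixes S :: "'a set" and F K Z :: nat and R :: "nat \<Rightarrow> nat \<Rightarrow> 'a option"
  assumes "F \<ge> 1" and "K \<ge> 1" and "Z < F"
    and "is_PDA S F K Z R"
    and "t \<in> S" and "card (occ_cells F K R t) = Z + 1"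
  shows "int (card S) \<ge> (int F - int Z - 1) * (int Z + 1) + 1"
proof -
  define C where "C = occ_cells F K R t"
  have fin: "finite S" and c1: "\<forall>j\<in>{1..F}. \<forall>k\<in>{1..K}. R j k = None \<or> (\<exists>t\<in>S. R j k = Some t)"
    and c2: "\<forall>k\<in>{1..K}. card {j\<in>{1..F}. R j k = None} = Z"
    and c3: "\<forall>t\<in>S. \<forall>j\<in>{1..F}. \<forall>k1\<in>{1..K}. \<forall>k2\<in>{1..K}.
        R j k1 = Some t \<and> R j k2 = Some t \<longrightarrow> k1 = k2"
    and c4: "\<forall>t\<in>S. \<forall>k\<in>{1..K}. \<forall>j1\<in>{1..F}. \<forall>j2\<in>{1..F}.
        R j1 k = Some t \<and> R j2 k = Some t \<longrightarrow> j1 = j2"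
    and c5: "\<forall>t\<in>S. \<forall>j1\<in>{1..F}. \<forall>j2\<in>{1..F}. \<forall>k1\<in>{1..K}. \<forall>k2\<in>{1..K}.
        (j1, k1) \<noteq> (j2, k2) \<and> R j1 k1 = Some t \<and> R j2 k2 = Some t \<longrightarrow>
        R j1 k2 = None \<and> R j2 k1 = None"
    using assms(4) unfolding is_PDA_def by blast+
  have Cd: "C = {(j, k). j \<in> {1..F} \<and> k \<in> {1..K} \<and> R j k = Some t}"
    unfolding C_def occ_cells_def by simp
  have finC: "finite C" unfolding Cd
    by (rule finite_subset[of _ "{1..F} \<times> {1..K}"]) auto
  have cardC: "card C = Z + 1" using assms(6) C_def by simp
  define J where "J = fst ` C"
  define Kc where "Kc = snd ` C"
  have injfst: "inj_on fst C"
    unfolding inj_on_def Cd using c3 assms(5) by fastforce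
  have injsnd: "inj_on snd C"
    unfolding inj_on_def Cd using c4 assms(5) by fastforce
  have cardJ: "card J = Z + 1" unfolding J_def using card_image[OF injfst] cardC by simp
  have cardKc: "card Kc = Z + 1" unfolding Kc_def using card_image[OF injsnd] cardC by simp
  have JF: "J \<subseteq> {1..F}" unfolding J_def Cd by auto
  have KK: "Kc \<subseteq> {1..K}" unfolding Kc_def Cd by auto
  have key: "R j k \<noteq> None" if k: "k \<in> Kc" and j: "j \<in> {1..F} - J" for j k
  proof -
    obtain ji where ci: "(ji, k) \<in> C" using k Kc_def by force
    define E where "E = {j\<in>{1..F}. R j k = None}"
    have cE: "card E = Z" using c2 KK k E_def by auto
    have sub: "J - {ji} \<subseteq> E"
    proof
      fix x assume x: "x \<in> J - {ji}"
      then obtain kl where cl: "(x, kl) \<in> C" using J_def by force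
      have "(x, kl) \<noteq> (ji, k)" using x by auto
      then have "R x k = None" using c5 assms(5) cl ci unfolding Cd by blast
      then show "x \<in> E" using x JF E_def by auto
    qed
    have jiJ: "ji \<in> J" using ci J_def by force
    have "card (J - {ji}) = Z" using cardJ jiJ by simp
    moreover have "finite E" unfolding E_def by simp
    ultimately have "J - {ji} = E" using sub cE card_subset_eq by metis
    then show ?thesis using j E_def by auto
  qed
  define P where "P = ({1..F} - J) \<times> Kc"
  define g where "g = (\<lambda>(j, k). the (R j k))"
  have gS: "g ` P \<subseteq> S - {t}"
  proof
    fix x assume "x \<in> g ` P"
    then obtain j k where jk: "(j,k) \<in> P" and x: "x = the (R j k)" using g_def by auto
    have kK: "k \<in> {1..K}" using jk KK P_def by auto
    obtain s where s: "s \<in> S" "R j k = Some s" using key[of k j] jk P_def c1 kK by fastforce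
    have "s \<noteq> t"
    proof
      assume "s = t"
      then have "(j,k) \<in> C" using s jk kK P_def Cd by auto
      then show False using jk P_def J_def by force
    qed
    then show "x \<in> S - {t}" using s x by simp
  qed
  have ginj: "inj_on g P"
  proof (rule inj_onI)
    fix a b assume a: "a \<in> P" and b: "b \<in> P" and e: "g a = g b"
    obtain j k where ajk: "a = (j,k)" by force
    obtain j' k' where bjk: "b = (j',k')" by force
    have kK: "k \<in> {1..K}" "k' \<in> {1..K}" using a b ajk bjk KK P_def by auto
    have jF: "j \<in> {1..F}" "j' \<in> {1..F}" using a b ajk bjk P_def by auto
    obtain s where s: "s \<in> S" "R j k = Some s" using key[of k j] a ajk P_def c1 kK jF by fastforce
    obtain s' where s': "s' \<in> S" "R j' k' = Some s'" using key[of k' j'] b bjk P_def c1 kK jF by fastforce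
    have ss: "s = s'" using e s s' ajk bjk g_def by simp
    show "a = b"
    proof (rule ccontr)
      assume ne: "a \<noteq> b"
      have "R j k' = None" using c5 s s' ss ne ajk bjk kK jF by blast
      then show False using key[of k' j] b bjk a ajk P_def by auto
    qed
  qed
  have cardP: "card P = (F - (Z+1)) * (Z + 1)"
    unfolding P_def using cardKc cardJ JF card_Diff_subset[of J "{1..F}"]
    by (simp add: card_cartesian_product finite_subset)
  have "card P \<le> card (S - {t})"
    using card_inj_on_le[OF ginj gS] fin by simp
  moreover have "card (S - {t}) = card S - 1" using assms(5) fin by simp
  moreover have "card S \<ge> 1" using assms(5) fin card_0_eq by (metis One_nat_def Suc_leI emptyE neq0_conv)
  ultimately have "(F - (Z+1)) * (Z + 1) + 1 \<le> card S" using cardP by linarith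
  then have "int ((F - (Z+1)) * (Z + 1) + 1) \<le> int (card S)" by linarith
  moreover have "int ((F - (Z+1)) * (Z + 1) + 1) = (int F - int Z - 1) * (int Z + 1) + 1"
    proof -
    have "int (F - (Z+1)) = int F - int Z - 1" using assms(3) by simp
    then show ?thesis by (simp only: of_nat_add of_nat_mult) simp
  qed
  ultimately show ?thesis by simp
qed

end
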